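(* Let $R$ be an associative ring with identity, let $a,b,c\in R$ and put $t=cab$. Suppose $t$ is regular. Then the following are equivalent: (i) $a$ has a $(b,c)$-inverse; (ii) $r(a)\cap bR=\{0\}$ and $R=abR\oplus r(c)$; (iii) $r(t)=r(b)$ and $tR=cR$; (iv) $l(t)=l(c)$ and $Rt=Rb$; (v) $l(t)=l(c)$ and $r(t)=r(b)$.
   Context: For $a,b,c\in R$, $a$ is $(b,c)$-invertible if there exists $y\in R$ with $y\in (bRy)\cap(yRc)$, $yab=b$ and $cay=c$; such $y$ is unique and called the $(b,c)$-inverse of $a$, denoted $a^{\|(b,c)}$. An element is regular if $x=xzx$ for some $z\in R$. For $x\in R$: $l(x)=\{z\in R:zx=0\}$, $r(x)=\{z\in R:xz=0\}$, $xR=\{xz:z\in R\}$, $Rx=\{zx:z\in R\}$; $\oplus$ denotes an internal direct sum of right ideals (additive subgroups). *)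

theory Defs
  imports Main
begin

definition right_ann :: "'a::ring_1 \<Rightarrow> 'a set" where
  "right_ann x = {z. x * z = 0}"

definition left_ann :: "'a::ring_1 \<Rightarrow> 'a set" where
  "left_ann x = {z. z * x = 0}"

definition right_ideal_gen :: "'a::ring_1 \<Rightarrow> 'a set" where
  "right_ideal_gen x = {x * z | z. True}"

definition left_ideal_gen :: "'a::ring_1 \<Rightarrow> 'a set" where
  "left_ideal_gen x = {z * x | z. True}"

definition regular_elem :: "'a::ring_1 \<Rightarrow> bool" where
  "regular_elem x \<longleftrightarrow> (\<exists>z. x = x * z * x)"

definition is_bc_inverse :: "'a::ring_1 \<Rightarrow> 'a \<Rightarrow> 'a \<Rightarrow> 'a \<Rightarrow> bool" where
  "is_bc_inverse a b c y \<longleftrightarrow>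
     y \<in> {b * z * y | z. True} \<and> y \<in> {y * z * c | z. True} \<and> y * a * b = b \<and> c * a * y = c"

definition bc_invertible :: "'a::ring_1 \<Rightarrow> 'a \<Rightarrow> 'a \<Rightarrow> bool" where
  "bc_invertible a b c \<longleftrightarrow> (\<exists>y. is_bc_inverse a b c y)"

definition internal_direct_sum :: "'a::ring_1 set \<Rightarrow> 'a set \<Rightarrow> 'a set \<Rightarrow> bool" where
  "internal_direct_sum S A B \<longleftrightarrow> S = {u + v | u v. u \<in> A \<and> v \<in> B} \<and> A \<inter> B = {0}"

end

theory Submission
  imports Defs
begin

lemma inv_iff:
  fixes a b c :: "'a::ring_1"
  shows "bc_invertible a b c \<longleftrightarrow> (\<exists>x. b = x * (c*a*b)) \<and> (\<exists>z. c = c*a*b*z)"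
proof
  assume "bc_invertible a b c"
  then obtain y u v where y1: "y = b*u*y" and y2: "y = y*v*c" and y3: "y*a*b = b" and y4: "c*a*y = c"
    unfolding bc_invertible_def is_bc_inverse_def by blast
  have "(y*v)*(c*a*b) = (y*v*c)*a*b" by (simp add: mult.assoc)
  also have "y*v*c = y" using y2 by simp
  finally have "b = (y*v)*(c*a*b)" using y3 by simp
  moreover have "c*a*b*(u*y) = c*a*(b*u*y)" by (simp add: mult.assoc)
  hence "c = c*a*b*(u*y)" using y1 y4 by simp
  ultimately show "(\<exists>x. b = x * (c*a*b)) \<and> (\<exists>z. c = c*a*b*z)" by blast
next
  assume "(\<exists>x. b = x * (c*a*b)) \<and> (\<exists>z. c = c*a*b*z)"
  then obtain x z where hx: "b = x*(c*a*b)" and hz: "c = c*a*b*z" by blast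
  define y where "y = b*z"
  have xc: "x*c = y"
  proof -
    have "x*c = x*(c*a*b)*z" using hz by (metis mult.assoc)
    thus ?thesis using hx unfolding y_def by simp
  qed
  have yab: "y*a*b = b"
  proof -
    have "b = x*c*a*b" using hx by (simp add: mult.assoc)
    also have "\<dots> = y*a*b" using xc by simp
    finally show ?thesis by simp
  qed
  have cay: "c*a*y = c" unfolding y_def using hz by (simp add: mult.assoc)
  have yay: "y*a*y = y"
  proof -
    have "y*a*y = (y*a*b)*z" unfolding y_def by (simp add: mult.assoc)
    thus ?thesis using yab unfolding y_def by simp
  qed
  have "y = b*(z*a)*y" using yay unfolding y_def by (simp add: mult.assoc)
  moreover have "y = y*(a*x)*c" using yay xc by (simp add: mult.assoc)
  ultimately show "bc_invertible a b c"
    unfolding bc_invertible_def is_bc_inverse_def using yab cay by blast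
qed

lemma rann_sub:
  fixes b t :: "'a::ring_1"
  assumes "right_ann t \<subseteq> right_ann b" and "t = t*s*t"
  shows "b = b*s*t"
proof -
  have "t*(1 - s*t) = 0" using assms(2) by (simp add: algebra_simps mult.assoc)
  hence "b*(1 - s*t) = 0" using assms(1) unfolding right_ann_def by blast
  thus ?thesis by (simp add: algebra_simps mult.assoc)
qed

lemma lann_sub:
  fixes c t :: "'a::ring_1"
  assumes "left_ann t \<subseteq> left_ann c" and "t = t*s*t"
  shows "c = t*s*c"
proof -
  have "(1 - t*s)*t = 0" using assms(2) by (simp add: algebra_simps mult.assoc)
  hence "(1 - t*s)*c = 0" using assms(1) unfolding left_ann_def by blast
  thus ?thesis by (simp add: algebra_simps mult.assoc)
qed

theorem theorem3p4:
  fixes a b c :: "'a::ring_1"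
  assumes "regular_elem (c * a * b)"
  shows "(bc_invertible a b c \<longleftrightarrow>
            right_ann a \<inter> right_ideal_gen b = {0} \<and>
            internal_direct_sum UNIV (right_ideal_gen (a * b)) (right_ann c))
       \<and> (bc_invertible a b c \<longleftrightarrow>
            right_ann (c * a * b) = right_ann b \<and> right_ideal_gen (c * a * b) = right_ideal_gen c)
       \<and> (bc_invertible a b c \<longleftrightarrow>
            left_ann (c * a * b) = left_ann c \<and> left_ideal_gen (c * a * b) = left_ideal_gen b)
       \<and> (bc_invertible a b c \<longleftrightarrow>
            left_ann (c * a * b) = left_ann c \<and> right_ann (c * a * b) = right_ann b)"
proof -
  define t where "t = c*a*b"
  obtain s where ts: "t = t*s*t" using assms unfolding regular_elem_def t_def by blast
  let ?P = "(\<exists>x. b = x * t) \<and> (\<exists>z. c = t*z)"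
  have I: "bc_invertible a b c \<longleftrightarrow> ?P" using inv_iff t_def by simp
  have rb: "right_ann b \<subseteq> right_ann t" unfolding right_ann_def t_def by (auto simp: mult.assoc)
  have lc: "left_ann c \<subseteq> left_ann t" unfolding left_ann_def t_def by (auto simp flip: mult.assoc)
  have rt: "(\<exists>x. b = x * t) \<Longrightarrow> right_ann t \<subseteq> right_ann b"
    unfolding right_ann_def by (auto simp: mult.assoc)
  have lt: "(\<exists>z. c = t*z) \<Longrightarrow> left_ann t \<subseteq> left_ann c"
    unfolding left_ann_def by (auto simp flip: mult.assoc)
  have tRc: "right_ideal_gen t \<subseteq> right_ideal_gen c"
    unfolding right_ideal_gen_def t_def by (auto simp: mult.assoc)
  have Rtb: "left_ideal_gen t \<subseteq> left_ideal_gen b"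
    unfolding left_ideal_gen_def t_def by (auto simp flip: mult.assoc)
  have A: "right_ann t = right_ann b \<Longrightarrow> \<exists>x. b = x*t"
    using rann_sub[OF _ ts, of b] by blast
  have B: "left_ann t = left_ann c \<Longrightarrow> \<exists>z. c = t*z"
    using lann_sub[OF _ ts, of c] by (metis mult.assoc order_refl)
  have c3: "?P \<longleftrightarrow> right_ann t = right_ann b \<and> right_ideal_gen t = right_ideal_gen c"
  proof
    assume P: ?P
    then obtain z where z: "c = t*z" by blast
    have "right_ideal_gen c \<subseteq> right_ideal_gen t"
      unfolding right_ideal_gen_def using z by (auto simp: mult.assoc)
    thus "right_ann t = right_ann b \<and> right_ideal_gen t = right_ideal_gen c"
      using P rt rb tRc by blast
  next
    assume h: "right_ann t = right_ann b \<and> right_ideal_gen t = right_ideal_gen c"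
    have "c \<in> right_ideal_gen c" unfolding right_ideal_gen_def by (metis (mono_tags) mem_Collect_eq mult_1_right)
    hence "c \<in> right_ideal_gen t" using h by simp
    hence "\<exists>z. c = t*z" unfolding right_ideal_gen_def by blast
    thus ?P using A h by blast
  qed
  have c4: "?P \<longleftrightarrow> left_ann t = left_ann c \<and> left_ideal_gen t = left_ideal_gen b"
  proof
    assume P: ?P
    then obtain x where x: "b = x*t" by blast
    have "left_ideal_gen b \<subseteq> left_ideal_gen t"
      unfolding left_ideal_gen_def using x by (auto simp flip: mult.assoc)
    thus "left_ann t = left_ann c \<and> left_ideal_gen t = left_ideal_gen b"
      using P lt lc Rtb by blast
  next
    assume h: "left_ann t = left_ann c \<and> left_ideal_gen t = left_ideal_gen b"
    have "b \<in> left_ideal_gen b" unfolding left_ideal_gen_def by (metis (mono_tags) mem_Collect_eq mult_1_left)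
    hence "b \<in> left_ideal_gen t" using h by simp
    hence "\<exists>x. b = x*t" unfolding left_ideal_gen_def by blast
    thus ?P using B h by blast
  qed
  have c5: "?P \<longleftrightarrow> left_ann t = left_ann c \<and> right_ann t = right_ann b"
    using A B rt lt rb lc by blast
  have c2: "?P \<longleftrightarrow> right_ann a \<inter> right_ideal_gen b = {0} \<and>
            internal_direct_sum UNIV (right_ideal_gen (a * b)) (right_ann c)"
  proof
    assume P: ?P
    then obtain x z where x: "b = x*t" and z: "c = t*z" by blast
    have "right_ann t \<subseteq> right_ann b" using rt P by blast
    have e1: "right_ann a \<inter> right_ideal_gen b \<subseteq> {0}"
    proof
      fix w assume "w \<in> right_ann a \<inter> right_ideal_gen b"
      then obtain v where w: "w = b*v" and aw: "a*w = 0"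
        unfolding right_ann_def right_ideal_gen_def by blast
      have "x*c*(a*w) = x*(c*a*b)*v" using w by (simp add: mult.assoc)
      hence "w = x*c*(a*w)" using w x[symmetric] t_def[symmetric] by simp
      thus "w \<in> {0}" using aw by simp
    qed
    have e2: "right_ideal_gen (a*b) \<inter> right_ann c \<subseteq> {0}"
    proof
      fix w assume "w \<in> right_ideal_gen (a*b) \<inter> right_ann c"
      then obtain v where w: "w = a*b*v" and cw: "c*w = 0"
        unfolding right_ann_def right_ideal_gen_def by blast
      have "t*v = 0" using cw w t_def by (simp add: mult.assoc)
      hence "b*v = 0" using \<open>right_ann t \<subseteq> right_ann b\<close> unfolding right_ann_def by blast
      thus "w \<in> {0}" using w by (simp add: mult.assoc)
    qed
    have e3: "UNIV \<subseteq> {u + v | u v. u \<in> right_ideal_gen (a*b) \<and> v \<in> right_ann c}"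
    proof
      fix w :: 'a
      have u1: "a*b*(z*w) \<in> right_ideal_gen (a*b)" unfolding right_ideal_gen_def by blast
      have "c*(w - a*b*(z*w)) = c*w - (c*a*b*z)*w" by (simp add: algebra_simps mult.assoc)
      hence "c*(w - a*b*(z*w)) = 0" using z[symmetric] t_def[symmetric] by simp
      hence v1: "w - a*b*(z*w) \<in> right_ann c" unfolding right_ann_def by simp
      show "w \<in> {u + v | u v. u \<in> right_ideal_gen (a*b) \<and> v \<in> right_ann c}"
      proof -
        have "w = a*b*(z*w) + (w - a*b*(z*w))" by simp
        thus ?thesis using u1 v1 by blast
      qed
    qed
    have z1: "0 \<in> right_ann a \<inter> right_ideal_gen b"
      unfolding right_ann_def right_ideal_gen_def by (auto intro: exI[of _ 0])
    have z2: "0 \<in> right_ideal_gen (a*b) \<inter> right_ann c"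
      unfolding right_ann_def right_ideal_gen_def by (auto intro: exI[of _ 0])
    show "right_ann a \<inter> right_ideal_gen b = {0} \<and>
            internal_direct_sum UNIV (right_ideal_gen (a * b)) (right_ann c)"
      unfolding internal_direct_sum_def using e1 e2 e3 z1 z2 by blast
  next
    assume h: "right_ann a \<inter> right_ideal_gen b = {0} \<and>
            internal_direct_sum UNIV (right_ideal_gen (a * b)) (right_ann c)"
    have h1: "right_ann a \<inter> right_ideal_gen b = {0}" using h by blast
    have h2: "right_ideal_gen (a*b) \<inter> right_ann c = {0}"
      using h unfolding internal_direct_sum_def by blast
    have h3: "UNIV = {u + v | u v. u \<in> right_ideal_gen (a*b) \<and> v \<in> right_ann c}"
      using h unfolding internal_direct_sum_def by blast
    have "right_ann t \<subseteq> right_ann b"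
    proof
      fix w assume "w \<in> right_ann t"
      hence "t*w = 0" unfolding right_ann_def by simp
      hence tw: "c*(a*b*w) = 0" unfolding t_def by (simp add: mult.assoc)
      have "a*b*w \<in> right_ideal_gen (a*b)" unfolding right_ideal_gen_def by blast
      moreover have "a*b*w \<in> right_ann c" unfolding right_ann_def using tw by simp
      ultimately have "a*b*w \<in> {0}" using h2 by blast
      hence abw: "a*(b*w) = 0" by (simp add: mult.assoc)
      have "b*w \<in> right_ann a" unfolding right_ann_def using abw by simp
      moreover have "b*w \<in> right_ideal_gen b" unfolding right_ideal_gen_def by blast
      ultimately have "b*w \<in> {0}" using h1 by blast
      thus "w \<in> right_ann b" unfolding right_ann_def by simp
    qed
    hence X: "\<exists>x. b = x*t" using A rb by blast
    have "(1::'a) \<in> {u + v | u v. u \<in> right_ideal_gen (a*b) \<and> v \<in> right_ann c}"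
      using h3 by (metis UNIV_I)
    then obtain u' v where uv: "1 = u' + v" and u'R: "u' \<in> right_ideal_gen (a*b)" and cv': "v \<in> right_ann c"
      by blast
    from u'R obtain u where u': "u' = a*b*u" unfolding right_ideal_gen_def by blast
    have cv: "c*v = 0" using cv' unfolding right_ann_def by simp
    have "c = c*(u' + v)" using uv by simp
    also have "\<dots> = c*a*b*u" using cv u' by (simp add: algebra_simps mult.assoc)
    also have "\<dots> = t*u" unfolding t_def ..
    finally show ?P using X by blast
  qed
  have T: "c*a*b = t" by (simp add: t_def)
  show ?thesis unfolding T
  proof (intro conjI)
    show "bc_invertible a b c = (right_ann a \<inter> right_ideal_gen b = {0} \<and>
            internal_direct_sum UNIV (right_ideal_gen (a * b)) (right_ann c))"
      using I c2 by (rule trans)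
    show "bc_invertible a b c = (right_ann t = right_ann b \<and> right_ideal_gen t = right_ideal_gen c)"
      using I c3 by (rule trans)
    show "bc_invertible a b c = (left_ann t = left_ann c \<and> left_ideal_gen t = left_ideal_gen b)"
      using I c4 by (rule trans)
    show "bc_invertible a b c = (left_ann t = left_ann c \<and> right_ann t = right_ann b)"
      using I c5 by (rule trans)
  qed
qed

end
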